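(* Let $A,G$ be selfadjoint operators in $\mathcal H$ with $\rho(AG)\neq\emptyset$ and $\rho(GA)\neq\emptyset$, and assume $0\in\sigma_{++}(AG)\cup\sigma_{--}(AG)$. Then $G$ is boundedly invertible.
   Context: $(\mathcal H,(\cdot,\cdot))$ is a complex Hilbert space; $A,G$ possibly unbounded selfadjoint operators; $AG,GA$ operator products with natural domains. $\rho(S)$ is the set of $\lambda$ with $S-\lambda$ injective, surjective with bounded everywhere defined inverse; $S$ boundedly invertible means $0\in\rho(S)$; $\sigma_{ap}(S)$ is the set of $\lambda$ with a sequence $(x_n)\subset\operatorname{dom}S$, $\|x_n\|=1$, $(S-\lambda)x_n\to0$. Fix $\lambda_0\in\mathbb C\setminus\mathbb R$ with $\lambda_0,\overline{\lambda_0}\in\rho(AG)$ (such exists), let $G_0:=G(AG-\lambda_0)^{-1}(AG-\overline{\lambda_0})^{-1}$ (bounded selfadjoint) and $[x,y]:=(G_0x,y)$; $AG$ is symmetric w.r.t. $[\cdot,\cdot]$. $\sigma_{++}(AG)$ ($\sigma_{--}(AG)$) is the set of $\lambda\in\sigma_{ap}(AG)$ such that every $(x_n)\subset\operatorname{dom}(AG)$ with $\|x_n\|=1$, $(AG-\lambda)x_n\to0$ satisfies $\liminf_n[x_n,x_n]>0$ (resp. $\limsup_n[x_n,x_n]<0$); these sets do not depend on $\lambda_0$. *)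

theory Defs
  imports "HOL-Analysis.Analysis"
begin

text \<open>HOL-Analysis has no complex inner product spaces, so we introduce the class of
complex Hilbert spaces: a real Banach space with a complex scalar multiplication
(extending the real one) and a complex inner product (linear in the first argument,
conjugate symmetric) inducing the given norm.\<close>

class complex_hilbert = banach +
  fixes scaleC :: "complex \<Rightarrow> 'a \<Rightarrow> 'a" (infixr \<open>*\<^sub>C\<close> 75)
    and cinner :: "'a \<Rightarrow> 'a \<Rightarrow> complex"
  assumes scaleC_add_right: "a *\<^sub>C (x + y) = a *\<^sub>C x + a *\<^sub>C y"
    and scaleC_add_left: "(a + b) *\<^sub>C x = a *\<^sub>C x + b *\<^sub>C x"
    and scaleC_scaleC: "a *\<^sub>C (b *\<^sub>C x) = (a * b) *\<^sub>C x"
    and scaleC_one: "1 *\<^sub>C x = x"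
    and scaleC_of_real: "complex_of_real r *\<^sub>C x = r *\<^sub>R x"
    and cinner_add_left: "cinner (x + y) z = cinner x z + cinner y z"
    and cinner_scaleC_left: "cinner (a *\<^sub>C x) y = a * cinner x y"
    and cinner_commute: "cinner y x = cnj (cinner x y)"
    and cinner_self_norm: "cinner x x = complex_of_real ((norm x)\<^sup>2)"

type_synonym 'a lop = "'a set \<times> ('a \<Rightarrow> 'a)"

definition opdom :: "'a lop \<Rightarrow> 'a set" where "opdom T = fst T"
definition opfun :: "'a lop \<Rightarrow> 'a \<Rightarrow> 'a" where "opfun T = snd T"

definition csubspace :: "'a::complex_hilbert set \<Rightarrow> bool" where
  "csubspace D \<longleftrightarrow> 0 \<in> D \<and> (\<forall>x\<in>D. \<forall>y\<in>D. x + y \<in> D) \<and> (\<forall>c. \<forall>x\<in>D. c *\<^sub>C x \<in> D)"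

definition linear_op :: "'a::complex_hilbert lop \<Rightarrow> bool" where
  "linear_op T \<longleftrightarrow> csubspace (opdom T) \<and>
     (\<forall>x\<in>opdom T. \<forall>y\<in>opdom T. opfun T (x + y) = opfun T x + opfun T y) \<and>
     (\<forall>c. \<forall>x\<in>opdom T. opfun T (c *\<^sub>C x) = c *\<^sub>C opfun T x)"

text \<open>Selfadjoint: densely defined linear operator with T = T*, i.e. T is symmetric and
every y for which x \<mapsto> (Tx, y) is represented by some z on dom T lies in dom T
(then necessarily T* y = z = T y by density).\<close>
definition selfadjoint :: "'a::complex_hilbert lop \<Rightarrow> bool" where
  "selfadjoint T \<longleftrightarrow> linear_op T \<and> closure (opdom T) = UNIV \<and>
     (\<forall>x\<in>opdom T. \<forall>y\<in>opdom T. cinner (opfun T x) y = cinner x (opfun T y)) \<and>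
     (\<forall>y z. (\<forall>x\<in>opdom T. cinner (opfun T x) y = cinner x z) \<longrightarrow> y \<in> opdom T)"

definition opmult :: "'a lop \<Rightarrow> 'a lop \<Rightarrow> 'a lop" where
  "opmult S T = ({x \<in> opdom T. opfun T x \<in> opdom S}, opfun S \<circ> opfun T)"

definition resolvent_set :: "'a::complex_hilbert lop \<Rightarrow> complex set" where
  "resolvent_set S = {lam.
     inj_on (\<lambda>x. opfun S x - lam *\<^sub>C x) (opdom S) \<and>
     (\<lambda>x. opfun S x - lam *\<^sub>C x) ` opdom S = UNIV \<and>
     (\<exists>C. \<forall>x\<in>opdom S. norm x \<le> C * norm (opfun S x - lam *\<^sub>C x))}"

definition resolvent :: "'a::complex_hilbert lop \<Rightarrow> complex \<Rightarrow> 'a \<Rightarrow> 'a" where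
  "resolvent S \<mu> y = (THE x. x \<in> opdom S \<and> opfun S x - \<mu> *\<^sub>C x = y)"

definition approx_point_spectrum :: "'a::complex_hilbert lop \<Rightarrow> complex set" where
  "approx_point_spectrum S = {lam. \<exists>xs :: nat \<Rightarrow> 'a.
     (\<forall>n. xs n \<in> opdom S \<and> norm (xs n) = 1) \<and>
     (\<lambda>n. opfun S (xs n) - lam *\<^sub>C xs n) \<longlonglongrightarrow> 0}"

definition Gnull :: "'a::complex_hilbert lop \<Rightarrow> 'a lop \<Rightarrow> complex \<Rightarrow> 'a \<Rightarrow> 'a" where
  "Gnull A G lam0 x = opfun G (resolvent (opmult A G) lam0 (resolvent (opmult A G) (cnj lam0) x))"

definition kform :: "'a::complex_hilbert lop \<Rightarrow> 'a lop \<Rightarrow> complex \<Rightarrow> 'a \<Rightarrow> 'a \<Rightarrow> complex" where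
  "kform A G lam0 x y = cinner (Gnull A G lam0 x) y"

definition sigma_pp :: "'a::complex_hilbert lop \<Rightarrow> 'a lop \<Rightarrow> complex \<Rightarrow> complex set" where
  "sigma_pp A G lam0 = {lam \<in> approx_point_spectrum (opmult A G). \<forall>xs :: nat \<Rightarrow> 'a.
     ((\<forall>n. xs n \<in> opdom (opmult A G) \<and> norm (xs n) = 1) \<and>
      (\<lambda>n. opfun (opmult A G) (xs n) - lam *\<^sub>C xs n) \<longlonglongrightarrow> 0) \<longrightarrow>
     liminf (\<lambda>n. ereal (Re (kform A G lam0 (xs n) (xs n)))) > 0}"

definition sigma_mm :: "'a::complex_hilbert lop \<Rightarrow> 'a lop \<Rightarrow> complex \<Rightarrow> complex set" where
  "sigma_mm A G lam0 = {lam \<in> approx_point_spectrum (opmult A G). \<forall>xs :: nat \<Rightarrow> 'a.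
     ((\<forall>n. xs n \<in> opdom (opmult A G) \<and> norm (xs n) = 1) \<and>
      (\<lambda>n. opfun (opmult A G) (xs n) - lam *\<^sub>C xs n) \<longlonglongrightarrow> 0) \<longrightarrow>
     limsup (\<lambda>n. ereal (Re (kform A G lam0 (xs n) (xs n)))) < 0}"

end

theory Submission
  imports Defs "HOL-Analysis.Analysis"
begin



lemma cinner_zero_left[simp]: "cinner 0 y = 0"
  using cinner_add_left[of 0 0 y] by simp

lemma cinner_zero_right[simp]: "cinner x 0 = 0"
  using cinner_zero_left[of x] cinner_commute[of 0 x] by simp

lemma cinner_add_right: "cinner x (y + z) = cinner x y + cinner x z"
  using cinner_add_left[of y z x] cinner_commute by (metis complex_cnj_add)

lemma cinner_scaleC_right: "cinner x (a *\<^sub>C y) = cnj a * cinner x y"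
  using cinner_scaleC_left[of a y x] cinner_commute by (metis complex_cnj_mult complex_cnj_cnj)

lemma scaleC_zero_left[simp]: "0 *\<^sub>C x = 0"
  using scaleC_of_real[of 0 x] by (metis of_real_0 scaleR_zero_left)

lemma scaleC_minus1: "(-1) *\<^sub>C x = - x"
  using scaleC_of_real[of "-1" x] by (metis of_real_1 of_real_minus scaleR_minus1_left)

lemma scaleC_zero_right[simp]: "a *\<^sub>C 0 = 0"
  using scaleC_add_right[of a 0 0] by simp

lemma scaleC_minus_right: "a *\<^sub>C (- x) = - (a *\<^sub>C x)"
  using scaleC_add_right[of a x "-x"] by (simp add: eq_neg_iff_add_eq_0 add.commute)

lemma scaleC_diff_right: "a *\<^sub>C (x - y) = a *\<^sub>C x - a *\<^sub>C y"
  by (simp only: diff_conv_add_uminus scaleC_add_right scaleC_minus_right)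

lemma scaleC_minus_left: "(- a) *\<^sub>C x = - (a *\<^sub>C x)"
  using scaleC_add_left[of a "-a" x] by (simp add: eq_neg_iff_add_eq_0 add.commute)

lemma scaleC_diff_left: "(a - b) *\<^sub>C x = a *\<^sub>C x - b *\<^sub>C x"
  by (simp only: diff_conv_add_uminus scaleC_add_left scaleC_minus_left)

lemma cinner_minus_left: "cinner (- x) y = - cinner x y"
  using cinner_add_left[of x "-x" y] by (simp add: eq_neg_iff_add_eq_0 add.commute)

lemma cinner_diff_left: "cinner (x - y) z = cinner x z - cinner y z"
  by (simp only: diff_conv_add_uminus cinner_add_left cinner_minus_left)

lemma cinner_minus_right: "cinner x (- y) = - cinner x y"
  using cinner_add_right[of x y "-y"] by (simp add: eq_neg_iff_add_eq_0 add.commute)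

lemma cinner_diff_right: "cinner x (y - z) = cinner x y - cinner x z"
  by (simp only: diff_conv_add_uminus cinner_add_right cinner_minus_right)

lemma cinner_scaleR_left: "cinner (r *\<^sub>R x) y = complex_of_real r * cinner x y"
  by (metis scaleC_of_real cinner_scaleC_left)

lemma cinner_scaleR_right: "cinner x (r *\<^sub>R y) = complex_of_real r * cinner x y"
  by (metis scaleC_of_real cinner_scaleC_right complex_cnj_complex_of_real)

lemma Re_cinner_self: "Re (cinner x x) = (norm x)\<^sup>2"
  by (simp add: cinner_self_norm)

lemma norm_scaleC: "norm (a *\<^sub>C x) = cmod a * norm x"
proof -
  have "complex_of_real ((norm (a *\<^sub>C x))\<^sup>2) = cinner (a *\<^sub>C x) (a *\<^sub>C x)"
    by (simp add: cinner_self_norm)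
  also have "\<dots> = (a * cnj a) * cinner x x"
    by (simp add: cinner_scaleC_left cinner_scaleC_right mult.assoc)
  also have "a * cnj a = complex_of_real ((cmod a)\<^sup>2)" by (rule complex_norm_square[symmetric])
  also have "cinner x x = complex_of_real ((norm x)\<^sup>2)" by (simp add: cinner_self_norm)
  finally have "complex_of_real ((norm (a *\<^sub>C x))\<^sup>2) = complex_of_real ((cmod a * norm x)\<^sup>2)"
    by (simp add: power_mult_distrib)
  hence "(norm (a *\<^sub>C x))\<^sup>2 = (cmod a * norm x)\<^sup>2" using of_real_eq_iff by blast
  thus ?thesis by (simp add: power2_eq_iff_nonneg)
qed

lemma cinner_self_real: "cinner x x = complex_of_real (Re (cinner x x))"
  by (simp add: cinner_self_norm)

lemma norm_add_sq: "(norm (x + y))\<^sup>2 = (norm x)\<^sup>2 + 2 * Re (cinner x y) + (norm y)\<^sup>2"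
proof -
  have "cinner (x+y) (x+y) = cinner x x + cinner x y + cinner y x + cinner y y"
    by (simp add: cinner_add_left cinner_add_right)
  hence "Re (cinner (x+y) (x+y)) = Re (cinner x x) + Re (cinner x y) + Re (cinner y x) + Re (cinner y y)"
    by simp
  moreover have "Re (cinner y x) = Re (cinner x y)" by (subst cinner_commute) simp
  ultimately show ?thesis by (simp add: Re_cinner_self)
qed

lemma norm_diff_sq: "(norm (x - y))\<^sup>2 = (norm x)\<^sup>2 - 2 * Re (cinner x y) + (norm y)\<^sup>2"
  using norm_add_sq[of x "-y"] by (simp add: cinner_minus_right)

lemma norm_sub_proj:
  assumes "v \<noteq> 0"
  shows "(norm (w - (cinner w v / complex_of_real ((norm v)\<^sup>2)) *\<^sub>C v))\<^sup>2
         = (norm w)\<^sup>2 - (cmod (cinner w v))\<^sup>2 / (norm v)\<^sup>2"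
proof -
  have nv: "norm v > 0" using assms by simp
  define c where "c = cinner w v / complex_of_real ((norm v)\<^sup>2)"
  have "(norm (w - c *\<^sub>C v))\<^sup>2 = (norm w)\<^sup>2 - 2 * Re (cnj c * cinner w v) + (cmod c)\<^sup>2 * (norm v)\<^sup>2"
    by (simp add: norm_diff_sq cinner_scaleC_right norm_scaleC power_mult_distrib)
  also have "cnj c * cinner w v = (cinner w v * cnj (cinner w v)) / complex_of_real ((norm v)\<^sup>2)"
    by (simp add: c_def)
  also have "cinner w v * cnj (cinner w v) = complex_of_real ((cmod (cinner w v))\<^sup>2)"
    by (rule complex_norm_square[symmetric])
  also have "complex_of_real ((cmod (cinner w v))\<^sup>2) / complex_of_real ((norm v)\<^sup>2)
      = complex_of_real ((cmod (cinner w v))\<^sup>2 / (norm v)\<^sup>2)" by simp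
  also have "(cmod c)\<^sup>2 = (cmod (cinner w v))\<^sup>2 / (norm v)\<^sup>2 / (norm v)\<^sup>2"
  proof -
    have "cmod c = cmod (cinner w v) / \<bar>(norm v)\<^sup>2\<bar>" unfolding c_def norm_divide norm_of_real ..
    thus ?thesis by (simp add: power_divide power2_eq_square)
  qed
  finally show ?thesis using nv unfolding c_def by (simp add: field_simps power2_eq_square)
qed

lemma cauchy_schwarz: "cmod (cinner x y) \<le> norm x * norm y"
proof (cases "y = 0")
  case True thus ?thesis by simp
next
  case False
  hence ny: "norm y > 0" by simp
  have "0 \<le> (norm (x - (cinner x y / complex_of_real ((norm y)\<^sup>2)) *\<^sub>C y))\<^sup>2" by simp
  also have "\<dots> = (norm x)\<^sup>2 - (cmod (cinner x y))\<^sup>2 / (norm y)\<^sup>2" by (rule norm_sub_proj[OF False])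
  finally have "(cmod (cinner x y))\<^sup>2 / (norm y)\<^sup>2 \<le> (norm x)\<^sup>2" by simp
  hence "(cmod (cinner x y))\<^sup>2 \<le> (norm x)\<^sup>2 * (norm y)\<^sup>2"
    using ny by (simp add: divide_le_eq)
  hence "(cmod (cinner x y))\<^sup>2 \<le> (norm x * norm y)\<^sup>2" by (simp add: power_mult_distrib)
  thus ?thesis by (simp add: abs_le_square_iff)
qed

lemma cinner_tendsto_left:
  assumes "f \<longlonglongrightarrow> x" shows "(\<lambda>n. cinner (f n) y) \<longlonglongrightarrow> cinner x y"
proof -
  have "(\<lambda>n. norm (f n - x) * norm y) \<longlonglongrightarrow> 0 * norm y"
    using assms by (intro tendsto_intros) (simp add: LIM_zero tendsto_norm_zero)
  hence "(\<lambda>n. norm (f n - x) * norm y) \<longlonglongrightarrow> 0" by simp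
  hence "(\<lambda>n. cinner (f n - x) y) \<longlonglongrightarrow> 0"
    by (rule tendsto_0_le[where K=1]) (simp add: cauchy_schwarz)
  hence "(\<lambda>n. cinner (f n) y - cinner x y) \<longlonglongrightarrow> 0" by (simp add: cinner_diff_left)
  thus ?thesis by (simp add: LIM_zero_iff)
qed

lemma cinner_tendsto_right:
  assumes "f \<longlonglongrightarrow> x" shows "(\<lambda>n. cinner y (f n)) \<longlonglongrightarrow> cinner y x"
proof -
  have "(\<lambda>n. cnj (cinner (f n) y)) \<longlonglongrightarrow> cnj (cinner x y)"
    using cinner_tendsto_left[OF assms] by (rule tendsto_cnj)
  moreover have "(\<lambda>n. cinner y (f n)) = (\<lambda>n. cnj (cinner (f n) y))"
    by (rule ext) (rule cinner_commute)
  moreover have "cinner y x = cnj (cinner x y)" by (rule cinner_commute)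
  ultimately show ?thesis by simp
qed

lemma dense_orth_zero:
  assumes "closure D = UNIV" "\<forall>x\<in>D. cinner x w = 0" shows "w = 0"
proof -
  have "w \<in> closure D" using assms by simp
  then obtain f where f: "\<forall>n. f n \<in> D" "f \<longlonglongrightarrow> w" by (meson closure_sequential)
  have "(\<lambda>n. cinner (f n) w) \<longlonglongrightarrow> cinner w w" by (rule cinner_tendsto_left[OF f(2)])
  moreover have "(\<lambda>n. cinner (f n) w) = (\<lambda>n. 0)" using f assms by auto
  ultimately have "cinner w w = 0" using LIMSEQ_unique tendsto_const by metis
  thus ?thesis by (simp add: cinner_self_norm)
qed

lemma inv_n1_lim: "(\<lambda>n. 1 / (real n + 1)) \<longlonglongrightarrow> 0"
proof -
  have "(\<lambda>n. inverse (real (Suc n))) \<longlonglongrightarrow> 0" by (rule LIMSEQ_inverse_real_of_nat)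
  moreover have "(\<lambda>n. inverse (real (Suc n))) = (\<lambda>n. 1 / (real n + 1))"
    by (rule ext) (simp add: inverse_eq_divide)
  ultimately show ?thesis by simp
qed


lemma baire_some_interior:
  fixes E :: "nat \<Rightarrow> 'a::{real_normed_vector,complete_space} set"
  assumes cl: "\<And>n. closed (E n)" and un: "(\<Union>n. E n) = UNIV"
  shows "\<exists>n. interior (E n) \<noteq> {}"
proof (rule ccontr)
  assume "\<not> ?thesis"
  hence "\<And>n. interior (E n) = {}" by blast
  hence "euclidean interior_of \<Union>(range E) = {}"
  proof (intro Baire_category_alt)
    show "completely_metrizable_space (euclidean :: 'a topology) \<or>
      locally_compact_space (euclidean :: 'a topology) \<and> regular_space (euclidean :: 'a topology)"
      using completely_metrizable_space_euclidean by blast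
    show "countable (range E)" by simp
    fix T assume "T \<in> range E" and ie: "\<And>n. interior (E n) = {}"
    then obtain n where "T = E n" by blast
    thus "closedin euclidean T \<and> euclidean interior_of T = {}"
      using cl[of n] ie[of n] by (simp add: closed_closedin[symmetric])
  qed
  thus False using un by simp
qed

lemma closed_graph_bounded:
  fixes K :: "'a::banach \<Rightarrow> 'b::banach"
  assumes lin: "linear K"
    and cl: "\<And>f g h. f \<longlonglongrightarrow> g \<Longrightarrow> (\<lambda>n. K (f n)) \<longlonglongrightarrow> h \<Longrightarrow> K g = h"
  shows "\<exists>M. \<forall>g. norm (K g) \<le> M * norm g"
proof -
  define E where "E n = closure {g. norm (K g) \<le> real n}" for n
  have "(\<Union>n. E n) = UNIV"
  proof -
    have "g \<in> E (nat \<lceil>norm (K g)\<rceil>)" for g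
      unfolding E_def by (rule subsetD[OF closure_subset]) (simp add: real_nat_ceiling_ge)
    thus ?thesis by blast
  qed
  then obtain n where "interior (E n) \<noteq> {}"
    using baire_some_interior[of E] by (auto simp: E_def)
  then obtain g0 where "g0 \<in> interior (E n)" by blast
  then obtain r where r: "r > 0" "ball g0 r \<subseteq> E n"
    by (meson mem_interior)
  have A: "\<exists>a. norm (K a) \<le> 2 * real n \<and> norm (h - a) < e" if h: "norm h < r" and e: "e > 0" for h e
  proof -
    have "g0 + h \<in> E n" "g0 \<in> E n" using r h by (auto simp: dist_norm)
    then obtain a1 a2 where a1: "norm (K a1) \<le> real n" "dist a1 (g0 + h) < e/2"
      and a2: "norm (K a2) \<le> real n" "dist a2 g0 < e/2"
      unfolding E_def closure_approachable using e by (metis half_gt_zero mem_Collect_eq)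
    have "norm (K (a1 - a2)) \<le> 2 * real n"
      using a1 a2 norm_triangle_ineq4[of "K a1" "K a2"] linear_diff[OF lin] by simp
    moreover have "norm (h - (a1 - a2)) < e"
    proof -
      have "h - (a1 - a2) = (g0 + h - a1) + (a2 - g0)" by (simp add: algebra_simps)
      hence "norm (h - (a1 - a2)) \<le> norm (g0 + h - a1) + norm (a2 - g0)"
        by (metis norm_triangle_ineq)
      thus ?thesis using a1 a2 by (simp add: dist_norm norm_minus_commute)
    qed
    ultimately show ?thesis by blast
  qed
  define L where "L = 4 * real n / r + 1"
  have "4 * real n / r \<ge> 0" using r by simp
  hence Lpos: "L > 0" by (simp add: L_def)
  have B: "\<exists>a. norm (K a) \<le> L * norm h \<and> norm (h - a) < e" if e: "e > 0" for h e
  proof (cases "h = 0")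
    case True thus ?thesis using e linear_0[OF lin] by (intro exI[of _ 0]) simp
  next
    case False
    hence nh: "norm h > 0" by simp
    define s where "s = r / (2 * norm h)"
    have s: "s > 0" using r nh by (simp add: s_def)
    have "norm (s *\<^sub>R h) < r" using r nh by (simp add: s_def)
    then obtain a' where a': "norm (K a') \<le> 2 * real n" "norm (s *\<^sub>R h - a') < e * s"
      using A[of "s *\<^sub>R h" "e * s"] e s by auto
    define a where "a = (1/s) *\<^sub>R a'"
    have "norm (K a) = norm (K a') / s" using s linear_scale[OF lin] by (simp add: a_def)
    also have "\<dots> \<le> 2 * real n / s" using a' s by (simp add: divide_right_mono)
    also have "\<dots> = 4 * real n / r * norm h" using nh r by (simp add: s_def field_simps)
    also have "\<dots> \<le> L * norm h" using nh by (simp add: L_def distrib_right)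
    finally have 1: "norm (K a) \<le> L * norm h" .
    have "h - a = (1/s) *\<^sub>R (s *\<^sub>R h - a')" using s by (simp add: a_def algebra_simps)
    hence "norm (h - a) = norm (s *\<^sub>R h - a') / s" using s by simp
    also have "\<dots> < e" using a' s by (simp add: divide_less_eq)
    finally show ?thesis using 1 by blast
  qed
  define ch where "ch h e = (SOME a. norm (K a) \<le> L * norm h \<and> norm (h - a) < e)" for h e
  have ch: "\<And>h e. e > 0 \<Longrightarrow> norm (K (ch h e)) \<le> L * norm h \<and> norm (h - ch h e) < e"
    unfolding ch_def by (rule someI_ex) (rule B)
  have "norm (K h) \<le> (2 * L) * norm h" for h
  proof (cases "h = 0")
    case True thus ?thesis using linear_0[OF lin] by simp
  next
    case False
    hence nh: "norm h > 0" by simp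
    define hs where "hs = rec_nat h (\<lambda>k x. x - ch x (norm h / 2 ^ Suc k))"
    have hs0: "hs 0 = h" and hsS: "hs (Suc k) = hs k - ch (hs k) (norm h / 2 ^ Suc k)" for k
      by (simp_all add: hs_def)
    define a where "a k = ch (hs k) (norm h / 2 ^ Suc k)" for k
    have hsbound: "norm (hs k) \<le> norm h / 2 ^ k" for k
    proof (cases k)
      case 0 thus ?thesis by (simp add: hs0)
    next
      case (Suc j)
      have "norm (hs (Suc j)) < norm h / 2 ^ Suc j"
        using ch[of "norm h / 2 ^ Suc j" "hs j"] nh by (simp add: hsS)
      thus ?thesis using Suc by simp
    qed
    have Ka: "norm (K (a k)) \<le> L * norm h * (1/2) ^ k" for k
    proof -
      have "norm (K (a k)) \<le> L * norm (hs k)"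
        using ch[of "norm h / 2 ^ Suc k" "hs k"] nh by (simp add: a_def)
      also have "\<dots> \<le> L * (norm h / 2 ^ k)" by (rule mult_left_mono) (use hsbound[of k] Lpos in auto)
      also have "\<dots> = L * norm h * (1/2) ^ k" by (simp add: power_divide)
      finally show ?thesis .
    qed
    have psum: "(\<Sum>i<m. a i) = h - hs m" for m
      by (induction m) (simp_all add: hs0 hsS a_def)
    have "hs \<longlonglongrightarrow> 0"
    proof -
      have "(\<lambda>k. norm h * (1/2) ^ k) \<longlonglongrightarrow> norm h * 0"
        by (intro tendsto_intros) simp
      hence "(\<lambda>k. norm h * (1/2) ^ k) \<longlonglongrightarrow> 0" by simp
      thus ?thesis
        by (rule tendsto_0_le[where K=1])
           (use hsbound in \<open>simp add: power_divide\<close>)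
    qed
    hence "(\<lambda>m. \<Sum>i<m. a i) \<longlonglongrightarrow> h - 0" unfolding psum by (intro tendsto_intros)
    hence conv: "(\<lambda>m. \<Sum>i<m. a i) \<longlonglongrightarrow> h" by simp
    have geo: "summable (\<lambda>k. L * norm h * (1/2::real) ^ k)"
      by (intro summable_mult summable_geometric) simp
    have sn: "summable (\<lambda>k. norm (K (a k)))"
      by (rule summable_comparison_test'[OF geo]) (use Ka in auto)
    hence s: "summable (\<lambda>k. K (a k))" by (rule summable_norm_cancel)
    have "(\<lambda>m. K (\<Sum>i<m. a i)) \<longlonglongrightarrow> (\<Sum>k. K (a k))"
      using summable_LIMSEQ[OF s] by (simp add: linear_sum[OF lin])
    hence Kh: "K h = (\<Sum>k. K (a k))" by (rule cl[OF conv])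
    have "norm (K h) \<le> (\<Sum>k. norm (K (a k)))" unfolding Kh by (rule summable_norm[OF sn])
    also have "\<dots> \<le> (\<Sum>k. L * norm h * (1/2::real) ^ k)"
      by (rule suminf_le[OF _ sn geo]) (use Ka in auto)
    also have "\<dots> = L * norm h * 2"
      by (simp add: suminf_mult suminf_geometric[of "1/2::real"])
    finally show ?thesis by simp
  qed
  thus ?thesis by blast
qed


lemma parallelogram:
  fixes a b :: "'a::complex_hilbert"
  shows "(norm (a + b))\<^sup>2 + (norm (a - b))\<^sup>2 = 2 * (norm a)\<^sup>2 + 2 * (norm b)\<^sup>2"
  by (simp add: norm_add_sq norm_diff_sq)

lemma closed_csubspace_full:
  fixes M :: "'a::complex_hilbert set"
  assumes cl: "closed M" and z0: "0 \<in> M" and add: "\<And>x y. x \<in> M \<Longrightarrow> y \<in> M \<Longrightarrow> x + y \<in> M"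
    and sc: "\<And>c x. x \<in> M \<Longrightarrow> c *\<^sub>C x \<in> M"
    and orth: "\<And>w. (\<forall>m\<in>M. cinner m w = 0) \<Longrightarrow> w = 0"
  shows "z \<in> M"
proof -
  have scR: "r *\<^sub>R x \<in> M" if "x \<in> M" for r x using sc[OF that, of "complex_of_real r"] scaleC_of_real by metis
  have neg: "- x \<in> M" if "x \<in> M" for x using scR[OF that, of "-1"] by simp
  have diff: "x - y \<in> M" if "x \<in> M" "y \<in> M" for x y using add[OF that(1) neg[OF that(2)]] by simp
  define D where "D = (\<lambda>m. norm (z - m)) ` M"
  define d where "d = Inf D"
  have bdd: "bdd_below D" unfolding D_def by (rule bdd_belowI[of _ 0]) auto
  have Dne: "D \<noteq> {}" using z0 by (auto simp: D_def)
  have dle: "d \<le> norm (z - m)" if "m \<in> M" for m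
    unfolding d_def using that bdd by (auto simp: D_def intro!: cInf_lower)
  have d0: "d \<ge> 0" using dle[OF z0] z0 unfolding d_def D_def
    by (intro cInf_greatest) auto
  have approx: "\<exists>m\<in>M. norm (z - m) < d + e" if "e > 0" for e
  proof -
    have "Inf D < d + e" using that by (simp add: d_def)
    then obtain x where "x \<in> D" "x < d + e" using cInf_lessD[OF Dne] by blast
    thus ?thesis by (auto simp: D_def)
  qed
  have "\<forall>k. \<exists>m. m \<in> M \<and> norm (z - m) < d + 1 / (real k + 1)"
  proof
    fix k :: nat
    have "(0::real) < 1 / (real k + 1)" by simp
    from approx[OF this] show "\<exists>m. m \<in> M \<and> norm (z - m) < d + 1 / (real k + 1)" by blast
  qed
  then obtain ms where "\<forall>k. ms k \<in> M \<and> norm (z - ms k) < d + 1 / (real k + 1)"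
    by (metis choice)
  hence ms: "\<And>k. ms k \<in> M" "\<And>k. norm (z - ms k) < d + 1 / (real k + 1)" by auto
  have key: "(norm (ms j - ms k))\<^sup>2 \<le> 4 * d * (1/(real j+1)) + 2 * (1/(real j+1))\<^sup>2 + 4 * d * (1/(real k+1)) + 2 * (1/(real k+1))\<^sup>2" for j k
  proof -
    define a where "a = z - ms j"
    define b where "b = z - ms k"
    have mid: "(1/2::real) *\<^sub>R (ms j + ms k) \<in> M" using ms by (intro scR add)
    have "a + b = 2 *\<^sub>R (z - (1/2::real) *\<^sub>R (ms j + ms k))" by (simp add: a_def b_def algebra_simps scaleR_2)
    hence "norm (a + b) = 2 * norm (z - (1/2::real) *\<^sub>R (ms j + ms k))" by simp
    hence ab: "norm (a + b) \<ge> 2 * d" using dle[OF mid] by simp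
    have eq: "(norm (ms j - ms k))\<^sup>2 = 2 * (norm a)\<^sup>2 + 2 * (norm b)\<^sup>2 - (norm (a + b))\<^sup>2"
      using parallelogram[of a b] by (simp add: a_def b_def norm_minus_commute)
    have s1: "(2 * d)\<^sup>2 \<le> (norm (a + b))\<^sup>2" by (rule power_mono) (use ab d0 in auto)
    have s2: "(norm a)\<^sup>2 \<le> (d + 1/(real j+1))\<^sup>2" using ms(2)[of j] d0 unfolding a_def
      by (intro power_mono) auto
    have s3: "(norm b)\<^sup>2 \<le> (d + 1/(real k+1))\<^sup>2" using ms(2)[of k] d0 unfolding b_def
      by (intro power_mono) auto
    have e1: "(2 * d)\<^sup>2 = 4 * d\<^sup>2" by (simp add: power2_eq_square)
    have e2: "(d + 1/(real j+1))\<^sup>2 = d\<^sup>2 + 2 * d * (1/(real j+1)) + (1/(real j+1))\<^sup>2"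
      by (simp add: power2_sum)
    have e3: "(d + 1/(real k+1))\<^sup>2 = d\<^sup>2 + 2 * d * (1/(real k+1)) + (1/(real k+1))\<^sup>2"
      by (simp add: power2_sum)
    show ?thesis using eq s1 s2 s3 e1 e2 e3 by linarith
  qed
  have "Cauchy ms"
  proof (rule metric_CauchyI)
    fix e :: real assume e: "e > 0"
    define f where "f t = 8 * d * t + 4 * t\<^sup>2" for t :: real
    have "(\<lambda>N. f (1 / (real N + 1))) \<longlonglongrightarrow> f 0" unfolding f_def
      by (intro tendsto_intros inv_n1_lim)
    hence "(\<lambda>N. f (1 / (real N + 1))) \<longlonglongrightarrow> 0" by (simp add: f_def)
    then obtain N where N: "\<And>n. n \<ge> N \<Longrightarrow> \<bar>f (1 / (real n + 1))\<bar> < e\<^sup>2"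
      using e by (metis LIMSEQ_D diff_zero real_norm_def zero_less_power)
    show "\<exists>M. \<forall>m\<ge>M. \<forall>n\<ge>M. dist (ms m) (ms n) < e"
    proof (intro exI allI impI)
      fix m n assume mn: "m \<ge> N" "n \<ge> N"
      have mono: "1/(real m+1) \<le> 1/(real N+1)" "1/(real n+1) \<le> 1/(real N+1)"
        using mn by (simp_all add: frac_le)
      have "(norm (ms m - ms n))\<^sup>2 \<le> 4 * d * (1/(real m+1)) + 2 * (1/(real m+1))\<^sup>2 + 4 * d * (1/(real n+1)) + 2 * (1/(real n+1))\<^sup>2"
        by (rule key)
      also have "\<dots> \<le> f (1 / (real N + 1))" unfolding f_def
      proof -
        have a: "4 * d * (1/(real m+1)) \<le> 4 * d * (1/(real N+1))" "4 * d * (1/(real n+1)) \<le> 4 * d * (1/(real N+1))"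
          using mult_left_mono[OF mono(1), of "4 * d"] mult_left_mono[OF mono(2), of "4 * d"] d0 by simp_all
        have b: "(1/(real m+1))\<^sup>2 \<le> (1/(real N+1))\<^sup>2" "(1/(real n+1))\<^sup>2 \<le> (1/(real N+1))\<^sup>2"
          using mono by (simp_all add: power_mono)
        show "4 * d * (1/(real m+1)) + 2 * (1/(real m+1))\<^sup>2 + 4 * d * (1/(real n+1)) + 2 * (1/(real n+1))\<^sup>2 \<le> 8 * d * (1 / (real N + 1)) + 4 * (1 / (real N + 1))\<^sup>2"
          using a b by linarith
      qed
      also have "\<dots> < e\<^sup>2" using N[of N] by simp
      finally have "(norm (ms m - ms n))\<^sup>2 < e\<^sup>2" .
      thus "dist (ms m) (ms n) < e" using e by (simp add: dist_norm power_less_imp_less_base)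
    qed
  qed
  then obtain m where mlim: "ms \<longlonglongrightarrow> m" using complete_UNIV convergent_eq_Cauchy by blast
  have mM: "m \<in> M" using cl ms(1) mlim closed_sequentially by blast
  have "(\<lambda>k. norm (z - ms k)) \<longlonglongrightarrow> norm (z - m)" using mlim by (intro tendsto_intros)
  moreover have "(\<lambda>k. norm (z - ms k)) \<longlonglongrightarrow> d"
  proof (rule tendsto_sandwich[of "\<lambda>k. d" _ _ "\<lambda>k. d + 1 / (real k + 1)"])
    show "\<forall>\<^sub>F k in sequentially. d \<le> norm (z - ms k)" using dle ms by auto
    show "\<forall>\<^sub>F k in sequentially. norm (z - ms k) \<le> d + 1 / (real k + 1)" using ms(2) by (intro always_eventually allI less_imp_le)
    show "(\<lambda>k. d) \<longlonglongrightarrow> d" by simp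
    show "(\<lambda>k. d + 1 / (real k + 1)) \<longlonglongrightarrow> d"
      using tendsto_add[OF tendsto_const[of d] inv_n1_lim] by simp
  qed
  ultimately have nd: "norm (z - m) = d" using LIMSEQ_unique by blast
  define w where "w = z - m"
  have "cinner v w = 0" if v: "v \<in> M" for v
  proof (cases "v = 0")
    case True thus ?thesis by simp
  next
    case False
    define t where "t = cinner w v / complex_of_real ((norm v)\<^sup>2)"
    have "m + t *\<^sub>C v \<in> M" using add[OF mM sc[OF v]] by simp
    hence "d \<le> norm (z - (m + t *\<^sub>C v))" by (rule dle)
    also have "z - (m + t *\<^sub>C v) = w - t *\<^sub>C v" by (simp add: w_def)
    finally have "d\<^sup>2 \<le> (norm (w - t *\<^sub>C v))\<^sup>2" using d0 by (simp add: power_mono)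
    hence "(norm w)\<^sup>2 \<le> (norm w)\<^sup>2 - (cmod (cinner w v))\<^sup>2 / (norm v)\<^sup>2"
      using norm_sub_proj[OF False, of w] nd by (simp add: t_def w_def)
    hence "(cmod (cinner w v))\<^sup>2 / (norm v)\<^sup>2 \<le> 0" by simp
    hence "(cmod (cinner w v))\<^sup>2 \<le> 0" using False by (simp add: divide_le_0_iff)
    hence "cinner w v = 0" by simp
    thus ?thesis by (metis cinner_commute complex_cnj_zero)
  qed
  hence "w = 0" by (intro orth) blast
  thus ?thesis using mM by (simp add: w_def)
qed


lemma opmult_dom: "x \<in> opdom (opmult S T) \<longleftrightarrow> x \<in> opdom T \<and> opfun T x \<in> opdom S"
  by (simp add: opmult_def opdom_def)

lemma opmult_fun: "opfun (opmult S T) x = opfun S (opfun T x)"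
  by (simp add: opmult_def opfun_def)

locale sa_op =
  fixes T :: "'a::complex_hilbert lop"
  assumes sa: "selfadjoint T"
begin

lemma lin: "linear_op T" using sa by (simp add: selfadjoint_def)
lemma dom0: "0 \<in> opdom T" using lin by (simp add: linear_op_def csubspace_def)
lemma dom_add: "x \<in> opdom T \<Longrightarrow> y \<in> opdom T \<Longrightarrow> x + y \<in> opdom T"
  using lin by (simp add: linear_op_def csubspace_def)
lemma dom_sc: "x \<in> opdom T \<Longrightarrow> c *\<^sub>C x \<in> opdom T"
  using lin by (simp add: linear_op_def csubspace_def)
lemma f_add: "x \<in> opdom T \<Longrightarrow> y \<in> opdom T \<Longrightarrow> opfun T (x + y) = opfun T x + opfun T y"
  using lin by (simp add: linear_op_def)
lemma f_sc: "x \<in> opdom T \<Longrightarrow> opfun T (c *\<^sub>C x) = c *\<^sub>C opfun T x"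
  using lin by (simp add: linear_op_def)
lemma dom_scR: "x \<in> opdom T \<Longrightarrow> r *\<^sub>R x \<in> opdom T"
  by (metis dom_sc scaleC_of_real)
lemma f_scR: "x \<in> opdom T \<Longrightarrow> opfun T (r *\<^sub>R x) = r *\<^sub>R opfun T x"
  by (metis f_sc scaleC_of_real)
lemma dom_neg: "x \<in> opdom T \<Longrightarrow> - x \<in> opdom T"
  using dom_scR[of x "-1"] by simp
lemma f_neg: "x \<in> opdom T \<Longrightarrow> opfun T (- x) = - opfun T x"
  using f_scR[of x "-1"] by simp
lemma dom_diff: "x \<in> opdom T \<Longrightarrow> y \<in> opdom T \<Longrightarrow> x - y \<in> opdom T"
proof -
  assume a: "x \<in> opdom T" "y \<in> opdom T"
  have "x + - y \<in> opdom T" using dom_add[OF a(1) dom_neg[OF a(2)]] .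
  thus ?thesis by (simp only: diff_conv_add_uminus)
qed
lemma f_diff: "x \<in> opdom T \<Longrightarrow> y \<in> opdom T \<Longrightarrow> opfun T (x - y) = opfun T x - opfun T y"
proof -
  assume a: "x \<in> opdom T" "y \<in> opdom T"
  have "opfun T (x + - y) = opfun T x + - opfun T y"
    using f_add[OF a(1) dom_neg[OF a(2)]] f_neg[OF a(2)] by simp
  thus ?thesis by (simp only: diff_conv_add_uminus)
qed
lemma f0: "opfun T 0 = 0"
  using f_scR[OF dom0, of 0] by simp
lemma sym: "x \<in> opdom T \<Longrightarrow> y \<in> opdom T \<Longrightarrow> cinner (opfun T x) y = cinner x (opfun T y)"
  using sa by (simp add: selfadjoint_def)
lemma dense: "closure (opdom T) = UNIV"
  using sa by (simp add: selfadjoint_def)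
lemma adj: "(\<And>x. x \<in> opdom T \<Longrightarrow> cinner (opfun T x) y = cinner x z) \<Longrightarrow> y \<in> opdom T"
  using sa unfolding selfadjoint_def by blast

lemma adj_eq:
  assumes "\<And>x. x \<in> opdom T \<Longrightarrow> cinner (opfun T x) y = cinner x z"
  shows "y \<in> opdom T \<and> opfun T y = z"
proof
  show y: "y \<in> opdom T" using adj assms by blast
  have "\<forall>x\<in>opdom T. cinner x (opfun T y - z) = 0"
    using assms sym[OF _ y] by (simp add: cinner_diff_right)
  thus "opfun T y = z" using dense_orth_zero[OF dense] by fastforce
qed

lemma closed_op:
  assumes u: "\<And>n. u n \<in> opdom T" and ux: "u \<longlonglongrightarrow> x" and uh: "(\<lambda>n. opfun T (u n)) \<longlonglongrightarrow> h"
  shows "x \<in> opdom T \<and> opfun T x = h"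
proof (rule adj_eq)
  fix y assume y: "y \<in> opdom T"
  have "(\<lambda>n. cinner (opfun T y) (u n)) \<longlonglongrightarrow> cinner (opfun T y) x" by (rule cinner_tendsto_right[OF ux])
  moreover have "(\<lambda>n. cinner y (opfun T (u n))) \<longlonglongrightarrow> cinner y h" by (rule cinner_tendsto_right[OF uh])
  moreover have "cinner (opfun T y) (u n) = cinner y (opfun T (u n))" for n using sym[OF y u] .
  ultimately show "cinner (opfun T y) x = cinner y h" using LIMSEQ_unique by fastforce
qed

end

lemma res_props:
  assumes "lam \<in> resolvent_set S"
  shows "resolvent S lam y \<in> opdom S \<and> opfun S (resolvent S lam y) - lam *\<^sub>C resolvent S lam y = y"
proof -
  from assms have inj: "inj_on (\<lambda>x. opfun S x - lam *\<^sub>C x) (opdom S)"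
    and surj: "(\<lambda>x. opfun S x - lam *\<^sub>C x) ` opdom S = UNIV"
    by (auto simp: resolvent_set_def)
  have "y \<in> (\<lambda>x. opfun S x - lam *\<^sub>C x) ` opdom S" using surj by simp
  then obtain x where x: "x \<in> opdom S" "opfun S x - lam *\<^sub>C x = y" by blast
  have "\<exists>!x. x \<in> opdom S \<and> opfun S x - lam *\<^sub>C x = y"
    using x inj by (auto simp: inj_on_def)
  thus ?thesis unfolding resolvent_def by (rule theI')
qed

lemma res_unique:
  assumes "lam \<in> resolvent_set S" "x \<in> opdom S" "opfun S x - lam *\<^sub>C x = y"
  shows "resolvent S lam y = x"
proof -
  from assms have inj: "inj_on (\<lambda>x. opfun S x - lam *\<^sub>C x) (opdom S)"
    by (auto simp: resolvent_set_def)
  thus ?thesis using res_props[OF assms(1), of y] assms(2,3) by (auto simp: inj_on_def)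
qed

lemma res_bound:
  assumes "lam \<in> resolvent_set S"
  obtains C where "C \<ge> 0" "\<And>x. x \<in> opdom S \<Longrightarrow> norm x \<le> C * norm (opfun S x - lam *\<^sub>C x)"
proof -
  obtain C where C: "\<forall>x\<in>opdom S. norm x \<le> C * norm (opfun S x - lam *\<^sub>C x)"
    using assms by (auto simp: resolvent_set_def)
  have "norm x \<le> max C 0 * norm (opfun S x - lam *\<^sub>C x)" if "x \<in> opdom S" for x
  proof -
    have "C * norm (opfun S x - lam *\<^sub>C x) \<le> max C 0 * norm (opfun S x - lam *\<^sub>C x)"
      by (rule mult_right_mono) auto
    thus ?thesis using C that by (meson order_trans)
  qed
  thus ?thesis using that by (meson max.cobounded2)
qed

lemma res_norm:
  assumes "lam \<in> resolvent_set S" "C \<ge> 0" "\<And>x. x \<in> opdom S \<Longrightarrow> norm x \<le> C * norm (opfun S x - lam *\<^sub>C x)"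
  shows "norm (resolvent S lam y) \<le> C * norm y"
  using assms(3)[of "resolvent S lam y"] res_props[OF assms(1), of y] by simp


locale ag =
  A: sa_op A + G: sa_op G for A G :: "'a::complex_hilbert lop"
begin

abbreviation "T \<equiv> opmult A G"
abbreviation "U \<equiv> opmult G A"

lemma GA_bound:
  assumes nu: "nu \<in> resolvent_set T" and C: "C \<ge> 0"
    "\<And>x. x \<in> opdom T \<Longrightarrow> norm x \<le> C * norm (opfun T x - nu *\<^sub>C x)"
    and v: "v \<in> opdom U"
  shows "norm v \<le> C * norm (opfun G (opfun A v) - cnj nu *\<^sub>C v)"
proof -
  define s where "s = resolvent T nu v"
  have s: "s \<in> opdom T" "opfun T s - nu *\<^sub>C s = v" using res_props[OF nu] by (simp_all add: s_def)
  have sG: "s \<in> opdom G" "opfun G s \<in> opdom A" using s(1) by (simp_all add: opmult_dom)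
  have vA: "v \<in> opdom A" "opfun A v \<in> opdom G" using v by (simp_all add: opmult_dom)
  define w where "w = opfun G (opfun A v) - cnj nu *\<^sub>C v"
  have "cinner w s = cinner (opfun G (opfun A v)) s - cnj nu * cinner v s"
    by (simp add: w_def cinner_diff_left cinner_scaleC_left)
  also have "cinner (opfun G (opfun A v)) s = cinner (opfun A v) (opfun G s)" using G.sym vA sG by blast
  also have "\<dots> = cinner v (opfun A (opfun G s))" using A.sym vA sG by blast
  also have "cinner v (opfun A (opfun G s)) - cnj nu * cinner v s
      = cinner v (opfun A (opfun G s) - nu *\<^sub>C s)" by (simp add: cinner_diff_right cinner_scaleC_right)
  also have "opfun A (opfun G s) - nu *\<^sub>C s = v" using s(2) by (simp add: opmult_fun)
  finally have eq: "cinner w s = cinner v v" .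
  have "cmod (cinner v v) = \<bar>(norm v)\<^sup>2\<bar>" by (simp only: cinner_self_norm norm_of_real)
  hence "(norm v)\<^sup>2 = cmod (cinner v v)" by simp
  also have "\<dots> \<le> norm w * norm s" unfolding eq[symmetric] by (rule cauchy_schwarz)
  also have "norm s \<le> C * norm v" using C(2)[OF s(1)] s(2) by simp
  hence "norm w * norm s \<le> norm w * (C * norm v)" by (simp add: mult_left_mono)
  finally have "norm v * norm v \<le> (C * norm w) * norm v" by (simp add: power2_eq_square algebra_simps)
  hence "norm v \<le> C * norm w" by (cases "norm v = 0") (simp_all add: C mult_le_cancel_right)
  thus ?thesis by (simp add: w_def)
qed

lemma G_res:
  assumes nu: "nu \<in> resolvent_set T" and x: "x \<in> opdom G"
  shows "opfun G (resolvent T nu x) \<in> opdom U \<and>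
    opfun G (opfun A (opfun G (resolvent T nu x))) - nu *\<^sub>C opfun G (resolvent T nu x) = opfun G x"
proof -
  define s where "s = resolvent T nu x"
  have s: "s \<in> opdom T" "opfun T s - nu *\<^sub>C s = x" using res_props[OF nu] by (simp_all add: s_def)
  have sG: "s \<in> opdom G" "opfun G s \<in> opdom A" using s(1) by (simp_all add: opmult_dom)
  have AGs: "opfun A (opfun G s) = x + nu *\<^sub>C s" using s(2) by (simp add: opmult_fun algebra_simps)
  have "x + nu *\<^sub>C s \<in> opdom G" using x sG by (intro G.dom_add G.dom_sc)
  moreover have "opfun G (x + nu *\<^sub>C s) = opfun G x + nu *\<^sub>C opfun G s"
    using x sG by (simp add: G.f_add G.dom_sc G.f_sc)
  ultimately show ?thesis using sG AGs by (simp add: opmult_dom s_def[symmetric])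
qed

lemma G_res_bound:
  assumes nu: "nu \<in> resolvent_set T" and nu': "cnj nu \<in> resolvent_set T" and C: "C \<ge> 0"
    "\<And>x. x \<in> opdom T \<Longrightarrow> norm x \<le> C * norm (opfun T x - cnj nu *\<^sub>C x)"
    and x: "x \<in> opdom G"
  shows "norm (opfun G (resolvent T nu x)) \<le> C * norm (opfun G x)"
  using GA_bound[OF nu' C, of "opfun G (resolvent T nu x)"] G_res[OF nu x] by simp

lemma Gnull_bound:
  assumes l: "lam \<in> resolvent_set T" and l': "cnj lam \<in> resolvent_set T"
    and C1: "C1 \<ge> 0" "\<And>x. x \<in> opdom T \<Longrightarrow> norm x \<le> C1 * norm (opfun T x - lam *\<^sub>C x)"
    and C2: "C2 \<ge> 0" "\<And>x. x \<in> opdom T \<Longrightarrow> norm x \<le> C2 * norm (opfun T x - cnj lam *\<^sub>C x)"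
    and y: "y \<in> opdom G"
  shows "norm (Gnull A G lam y) \<le> C2 * (C1 * norm (opfun G y))"
proof -
  define r where "r = resolvent T (cnj lam) y"
  have r: "r \<in> opdom G" using res_props[OF l'] by (simp add: r_def opmult_dom)
  have 1: "norm (opfun G r) \<le> C1 * norm (opfun G y)"
    unfolding r_def using G_res_bound[of "cnj lam" C1 y] l l' C1 y by simp
  have 2: "norm (opfun G (resolvent T lam r)) \<le> C2 * norm (opfun G r)"
    by (rule G_res_bound[OF l l' C2 r])
  have "norm (Gnull A G lam y) = norm (opfun G (resolvent T lam r))"
    by (simp add: Gnull_def r_def)
  also have "\<dots> \<le> C2 * norm (opfun G r)" by (rule 2)
  also have "\<dots> \<le> C2 * (C1 * norm (opfun G y))" using 1 C2(1) by (rule mult_left_mono)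
  finally show ?thesis .
qed

lemma U_dom_add: "x \<in> opdom U \<Longrightarrow> y \<in> opdom U \<Longrightarrow> x + y \<in> opdom U"
  by (auto simp: opmult_dom A.dom_add A.f_add G.dom_add)
lemma U_dom_scR: "x \<in> opdom U \<Longrightarrow> r *\<^sub>R x \<in> opdom U"
  by (auto simp: opmult_dom A.dom_scR A.f_scR G.dom_scR)
lemma U_f_add: "x \<in> opdom U \<Longrightarrow> y \<in> opdom U \<Longrightarrow> opfun U (x + y) = opfun U x + opfun U y"
  by (auto simp: opmult_dom opmult_fun A.f_add G.f_add)
lemma U_f_scR: "x \<in> opdom U \<Longrightarrow> opfun U (r *\<^sub>R x) = r *\<^sub>R opfun U x"
  by (auto simp: opmult_dom opmult_fun A.f_scR G.f_scR)

lemma K_bounded: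
  assumes mu: "mu \<in> resolvent_set U"
  shows "\<exists>M. \<forall>g. norm (opfun A (resolvent U mu g)) \<le> M * norm g"
proof -
  obtain C where C: "C \<ge> 0" "\<And>x. x \<in> opdom U \<Longrightarrow> norm x \<le> C * norm (opfun U x - mu *\<^sub>C x)"
    using res_bound[OF mu] by blast
  define R where "R = resolvent U mu"
  have R: "R g \<in> opdom U" "opfun U (R g) - mu *\<^sub>C R g = g" for g
    using res_props[OF mu] by (simp_all add: R_def)
  have Radd: "R (x + y) = R x + R y" for x y
    unfolding R_def by (rule res_unique[OF mu]) (use R U_dom_add U_f_add in \<open>auto simp: R_def scaleC_add_right algebra_simps\<close>)
  have RscR: "R (r *\<^sub>R x) = r *\<^sub>R R x" for r x
  proof -
    have "opfun U (r *\<^sub>R R x) - mu *\<^sub>C (r *\<^sub>R R x) = r *\<^sub>R x"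
      using R[of x] U_f_scR[OF R(1)]
      by (metis scaleC_diff_right scaleC_of_real scaleC_scaleC mult.commute)
    thus ?thesis unfolding R_def by (intro res_unique[OF mu]) (simp_all add: U_dom_scR R[unfolded R_def])
  qed
  have Rdiff: "R (x - y) = R x - R y" for x y
    using Radd[of "x - y" y] by (simp add: eq_diff_eq)
  have RA: "R g \<in> opdom A" "opfun A (R g) \<in> opdom G" for g using R(1) by (simp_all add: opmult_dom)
  have lin: "linear (\<lambda>g. opfun A (R g))"
    by (rule linearI) (simp_all add: Radd RscR A.f_add A.f_scR RA)
  have Rn: "norm (R g) \<le> C * norm g" for g unfolding R_def by (rule res_norm[OF mu C])
  have "\<exists>M. \<forall>g. norm (opfun A (R g)) \<le> M * norm g"
  proof (rule closed_graph_bounded[OF lin])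
    fix f g h assume fg: "f \<longlonglongrightarrow> g" and fh: "(\<lambda>n. opfun A (R (f n))) \<longlonglongrightarrow> h"
    have "(\<lambda>n. R (f n)) \<longlonglongrightarrow> R g"
    proof -
      have "(\<lambda>n. C * norm (f n - g)) \<longlonglongrightarrow> C * 0"
        using fg by (intro tendsto_intros) (simp add: LIM_zero tendsto_norm_zero)
      hence "(\<lambda>n. C * norm (f n - g)) \<longlonglongrightarrow> 0" by simp
      hence "(\<lambda>n. R (f n) - R g) \<longlonglongrightarrow> 0"
        by (rule tendsto_0_le[where K=1]) (use Rn C in \<open>auto simp: Rdiff[symmetric] abs_mult\<close>)
      thus ?thesis by (simp add: LIM_zero_iff)
    qed
    thus "opfun A (R g) = h" using A.closed_op[OF RA(1) _ fh] by blast
  qed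
  thus ?thesis by (simp add: R_def)
qed

end


context ag begin

lemma bounded_below:
  assumes resU: "resolvent_set U \<noteq> {}"
    and l: "lam0 \<in> resolvent_set T" and l': "cnj lam0 \<in> resolvent_set T"
    and sp: "0 \<in> sigma_pp A G lam0 \<union> sigma_mm A G lam0"
  shows "\<exists>c. \<forall>x\<in>opdom G. norm x \<le> c * norm (opfun G x)"
proof (rule ccontr)
  assume nb: "\<not> ?thesis"
  obtain mu where mu: "mu \<in> resolvent_set U" using resU by blast
  obtain Cm where Cm: "Cm \<ge> 0" "\<And>x. x \<in> opdom U \<Longrightarrow> norm x \<le> Cm * norm (opfun U x - mu *\<^sub>C x)"
    using res_bound[OF mu] by blast
  obtain M0 where M0: "\<And>g. norm (opfun A (resolvent U mu g)) \<le> M0 * norm g"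
    using K_bounded[OF mu] by blast
  define M where "M = max M0 0"
  have M: "M \<ge> 0" "\<And>g. norm (opfun A (resolvent U mu g)) \<le> M * norm g"
  proof -
    show "M \<ge> 0" by (simp add: M_def)
    fix g :: 'a
    have "M0 * norm g \<le> M * norm g" by (rule mult_right_mono) (auto simp: M_def)
    thus "norm (opfun A (resolvent U mu g)) \<le> M * norm g" using M0[of g] by linarith
  qed
  obtain C1 where C1: "C1 \<ge> 0" "\<And>x. x \<in> opdom T \<Longrightarrow> norm x \<le> C1 * norm (opfun T x - lam0 *\<^sub>C x)"
    using res_bound[OF l] by blast
  obtain C2 where C2: "C2 \<ge> 0" "\<And>x. x \<in> opdom T \<Longrightarrow> norm x \<le> C2 * norm (opfun T x - cnj lam0 *\<^sub>C x)"
    using res_bound[OF l'] by blast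
  define B where "B = 2 * M + 1"
  have B: "B \<ge> 1" using M by (simp add: B_def)
  have "\<exists>x. x \<in> opdom G \<and> norm x = 1 \<and> norm (opfun G x) \<le> 1 / ((real n + 1) * B)" for n
  proof -
    obtain x where x: "x \<in> opdom G" "\<not> norm x \<le> ((real n + 1) * B) * norm (opfun G x)"
      using nb by blast
    hence xn: "norm x > 0" using B by (smt (verit) mult_nonneg_nonneg norm_ge_zero of_nat_0_le_iff)
    define x' where "x' = (1 / norm x) *\<^sub>R x"
    have "x' \<in> opdom G" using x by (simp add: x'_def G.dom_scR)
    moreover have "norm x' = 1" using xn by (simp add: x'_def)
    moreover have "norm (opfun G x') \<le> 1 / ((real n + 1) * B)"
    proof -
      have "norm (opfun G x') = norm (opfun G x) / norm x" using x xn by (simp add: x'_def G.f_scR)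
      also have "\<dots> \<le> 1 / ((real n + 1) * B)"
      proof -
        define P where "P = (real n + 1) * B"
        have pos: "P > 0" using B by (simp add: P_def)
        have lt: "norm (opfun G x) * P \<le> norm x" using x(2) by (simp add: P_def mult.commute)
        have "norm (opfun G x) \<le> norm x / P" using lt pos by (simp add: pos_le_divide_eq)
        hence "norm (opfun G x) / norm x \<le> (norm x / P) / norm x"
          by (rule divide_right_mono) simp
        also have "(norm x / P) / norm x = 1 / P" using xn by simp
        finally show ?thesis by (simp add: P_def)
      qed
      finally show ?thesis .
    qed
    ultimately show ?thesis by blast
  qed
  hence "\<forall>n. \<exists>x. x \<in> opdom G \<and> norm x = 1 \<and> norm (opfun G x) \<le> 1 / ((real n + 1) * B)" by blast
  then obtain xs where "\<forall>n. xs n \<in> opdom G \<and> norm (xs n) = 1 \<and> norm (opfun G (xs n)) \<le> 1 / ((real n + 1) * B)"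
    by (metis choice)
  hence xs: "\<And>n. xs n \<in> opdom G" "\<And>n. norm (xs n) = 1"
    "\<And>n. norm (opfun G (xs n)) \<le> 1 / ((real n + 1) * B)" by auto
  define eps where "eps n = 1 / (real n + 1)" for n
  have eps: "eps n > 0" "(\<lambda>n. eps n) \<longlonglongrightarrow> 0" for n
    using inv_n1_lim by (simp_all add: eps_def)
  have Gx: "norm (opfun G (xs n)) \<le> eps n" "M * norm (opfun G (xs n)) \<le> 1/2" for n
  proof -
    have "1 / ((real n + 1) * B) \<le> eps n" using B by (simp add: eps_def frac_le)
    thus "norm (opfun G (xs n)) \<le> eps n" using xs(3)[of n] by linarith
    have "M * norm (opfun G (xs n)) \<le> M * (1 / ((real n + 1) * B))"
      using xs(3) M(1) by (rule mult_left_mono)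
    also have "\<dots> \<le> M / B"
    proof -
      have "M * (1 / ((real n + 1) * B)) = (M / B) * (1 / (real n + 1))" by simp
      also have "\<dots> \<le> (M / B) * 1" by (rule mult_left_mono) (use B M(1) in auto)
      finally show ?thesis by simp
    qed
    also have "\<dots> \<le> 1/2" using B M(1) by (simp add: B_def field_simps)
    finally show "M * norm (opfun G (xs n)) \<le> 1/2" .
  qed
  define u where "u n = resolvent U mu (opfun G (xs n))" for n
  have u: "u n \<in> opdom U" "opfun G (opfun A (u n)) - mu *\<^sub>C u n = opfun G (xs n)" for n
    using res_props[OF mu] by (simp_all add: u_def opmult_fun)
  have uA: "u n \<in> opdom A" "opfun A (u n) \<in> opdom G" for n using u(1) by (simp_all add: opmult_dom)
  have un: "norm (u n) \<le> Cm * eps n" for n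
    using res_norm[OF mu Cm, of "opfun G (xs n)"] Gx(1)[of n] Cm(1) unfolding u_def
    by (meson mult_left_mono order_trans)
  have Aun: "norm (opfun A (u n)) \<le> M * eps n" "norm (opfun A (u n)) \<le> 1/2" for n
    using M(2)[of "opfun G (xs n)"] Gx[of n] M(1) unfolding u_def
    by (meson mult_left_mono order_trans)+
  define y where "y n = opfun A (u n) - xs n" for n
  have yG: "y n \<in> opdom G" "opfun G (y n) = mu *\<^sub>C u n" for n
  proof -
    show "y n \<in> opdom G" using uA xs(1) by (simp add: y_def G.dom_diff)
    have "opfun G (y n) = opfun G (opfun A (u n)) - opfun G (xs n)"
      using uA xs(1) by (simp add: y_def G.f_diff)
    also have "\<dots> = mu *\<^sub>C u n" using u(2)[of n] by (simp add: algebra_simps)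
    finally show "opfun G (y n) = mu *\<^sub>C u n" .
  qed
  have yn: "norm (y n) \<ge> 1/2" for n
    using norm_triangle_ineq3[of "xs n" "opfun A (u n)"] Aun(2)[of n] xs(2)[of n]
    by (simp add: y_def norm_minus_commute)
  define z where "z n = (1 / norm (y n)) *\<^sub>R y n" for n
  have inv2: "1 / norm (y n) \<le> 2" "1 / norm (y n) > 0" for n
  proof -
    have p: "norm (y n) > 0" using yn[of n] by linarith
    show "1 / norm (y n) \<le> 2" using yn[of n] p by (simp add: divide_le_eq)
    show "1 / norm (y n) > 0" using p by simp
  qed
  have zG: "z n \<in> opdom G" "opfun G (z n) = (1 / norm (y n)) *\<^sub>R (mu *\<^sub>C u n)" for n
    using yG by (simp_all add: z_def G.dom_scR G.f_scR)
  have zT: "z n \<in> opdom T" "opfun T (z n) = (1 / norm (y n)) *\<^sub>R (mu *\<^sub>C opfun A (u n))" for n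
  proof -
    have "mu *\<^sub>C u n \<in> opdom A" using uA by (simp add: A.dom_sc)
    hence "opfun G (z n) \<in> opdom A" using zG by (simp add: A.dom_scR)
    thus "z n \<in> opdom T" using zG by (simp add: opmult_dom)
    show "opfun T (z n) = (1 / norm (y n)) *\<^sub>R (mu *\<^sub>C opfun A (u n))"
      using zG uA by (simp add: opmult_fun A.f_scR A.dom_sc A.f_sc)
  qed
  have zn: "norm (z n) = 1" for n
  proof -
    have p: "norm (y n) > 0" using yn[of n] by linarith
    thus ?thesis by (simp add: z_def)
  qed
  have Gz: "norm (opfun G (z n)) \<le> 2 * cmod mu * Cm * eps n" for n
  proof -
    have "norm (opfun G (z n)) = (1 / norm (y n)) * (cmod mu * norm (u n))"
      using zG inv2 by (simp add: norm_scaleC)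
    also have "\<dots> \<le> 2 * (cmod mu * (Cm * eps n))"
      using inv2[of n] un[of n] by (intro mult_mono mult_left_mono) auto
    finally show ?thesis by simp
  qed
  have Tz: "norm (opfun T (z n)) \<le> 2 * cmod mu * M * eps n" for n
  proof -
    have "norm (opfun T (z n)) = (1 / norm (y n)) * (cmod mu * norm (opfun A (u n)))"
      using zT inv2 by (simp add: norm_scaleC)
    also have "\<dots> \<le> 2 * (cmod mu * (M * eps n))"
      using inv2[of n] Aun(1)[of n] by (intro mult_mono mult_left_mono) auto
    finally show ?thesis by simp
  qed
  have lim0: "(\<lambda>n. K * eps n) \<longlonglongrightarrow> 0" for K :: real
    using tendsto_mult[OF tendsto_const[of K] eps(2)] by simp
  have Tz0: "(\<lambda>n. opfun T (z n) - 0 *\<^sub>C z n) \<longlonglongrightarrow> 0"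
    by (rule tendsto_0_le[OF lim0[of "2 * cmod mu * M"], where K=1]) (use Tz in \<open>auto intro!: always_eventually intro: order_trans[OF _ abs_ge_self]\<close>)
  have kf: "cmod (kform A G lam0 (z n) (z n)) \<le> (C2 * C1 * 2 * cmod mu * Cm) * eps n" for n
  proof -
    have "cmod (kform A G lam0 (z n) (z n)) \<le> norm (Gnull A G lam0 (z n)) * norm (z n)"
      unfolding kform_def by (rule cauchy_schwarz)
    also have "\<dots> \<le> C2 * (C1 * norm (opfun G (z n)))"
      using Gnull_bound[OF l l' C1 C2 zG(1)] zn by simp
    also have "\<dots> \<le> C2 * (C1 * (2 * cmod mu * Cm * eps n))"
      using Gz C1(1) C2(1) by (intro mult_left_mono) auto
    finally show ?thesis by simp
  qed
  have "(\<lambda>n. Re (kform A G lam0 (z n) (z n))) \<longlonglongrightarrow> 0"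
    by (rule tendsto_0_le[OF lim0[of "C2 * C1 * 2 * cmod mu * Cm"], where K=1])
       (use kf in \<open>auto intro!: always_eventually intro: order_trans[OF abs_Re_le_cmod] order_trans[OF _ abs_ge_self]\<close>)
  hence el: "(\<lambda>n. ereal (Re (kform A G lam0 (z n) (z n)))) \<longlonglongrightarrow> ereal 0"
    by (rule tendsto_ereal)
  have hyp: "(\<forall>n. z n \<in> opdom T \<and> norm (z n) = 1) \<and> (\<lambda>n. opfun T (z n) - 0 *\<^sub>C z n) \<longlonglongrightarrow> 0"
    using zT zn Tz0 by blast
  have li: "liminf (\<lambda>n. ereal (Re (kform A G lam0 (z n) (z n)))) = 0"
    using lim_imp_Liminf[OF trivial_limit_sequentially el] by (simp add: zero_ereal_def)
  have ls: "limsup (\<lambda>n. ereal (Re (kform A G lam0 (z n) (z n)))) = 0"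
    using lim_imp_Limsup[OF trivial_limit_sequentially el] by (simp add: zero_ereal_def)
  from sp show False
  proof
    assume "0 \<in> sigma_pp A G lam0"
    hence "liminf (\<lambda>n. ereal (Re (kform A G lam0 (z n) (z n)))) > 0"
      using hyp unfolding sigma_pp_def by blast
    thus False using li by simp
  next
    assume "0 \<in> sigma_mm A G lam0"
    hence "limsup (\<lambda>n. ereal (Re (kform A G lam0 (z n) (z n)))) < 0"
      using hyp unfolding sigma_mm_def by blast
    thus False using ls by simp
  qed
qed

end


theorem corollaryc:
  fixes A G :: "'a::complex_hilbert lop" and lam0 :: complex
  assumes "selfadjoint A" and "selfadjoint G"
    and "resolvent_set (opmult A G) \<noteq> {}" and "resolvent_set (opmult G A) \<noteq> {}"
    and "Im lam0 \<noteq> 0"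
    and "lam0 \<in> resolvent_set (opmult A G)" and "cnj lam0 \<in> resolvent_set (opmult A G)"
    and "0 \<in> sigma_pp A G lam0 \<union> sigma_mm A G lam0"
  shows "0 \<in> resolvent_set G"
proof -
  interpret ag A G using assms(1,2) by (simp add: ag_def sa_op_def)
  obtain c where c: "\<And>x. x \<in> opdom G \<Longrightarrow> norm x \<le> c * norm (opfun G x)"
    using bounded_below[OF assms(4,6,7,8)] by blast
  have inj: "inj_on (opfun G) (opdom G)"
  proof (rule inj_onI)
    fix x y assume xy: "x \<in> opdom G" "y \<in> opdom G" "opfun G x = opfun G y"
    have "norm (x - y) \<le> c * norm (opfun G (x - y))" using c G.dom_diff xy by blast
    thus "x = y" using xy by (simp add: G.f_diff)
  qed
  have surj: "opfun G ` opdom G = UNIV"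
  proof -
    have "z \<in> opfun G ` opdom G" for z
    proof (rule closed_csubspace_full)
      show "closed (opfun G ` opdom G)"
      unfolding closed_sequential_limits
      proof (intro allI impI, elim conjE)
        fix f h assume f: "\<forall>n. f n \<in> opfun G ` opdom G" and fh: "f \<longlonglongrightarrow> h"
        hence "\<forall>n. \<exists>x. x \<in> opdom G \<and> f n = opfun G x" by blast
        then obtain x where "\<forall>n. x n \<in> opdom G \<and> f n = opfun G (x n)" by (metis choice)
        hence x: "\<And>n. x n \<in> opdom G" "\<And>n. f n = opfun G (x n)" by auto
        have "Cauchy x"
        proof (rule metric_CauchyI)
          fix e :: real assume e: "e > 0"
          have "Cauchy f" using fh by (rule LIMSEQ_imp_Cauchy)
          then obtain N where N: "\<And>m n. m \<ge> N \<Longrightarrow> n \<ge> N \<Longrightarrow> dist (f m) (f n) < e / (\<bar>c\<bar> + 1)"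
            using e by (metis metric_CauchyD divide_pos_pos abs_ge_zero add_nonneg_pos zero_less_one)
          show "\<exists>M. \<forall>m\<ge>M. \<forall>n\<ge>M. dist (x m) (x n) < e"
          proof (intro exI allI impI)
            fix m n assume mn: "m \<ge> N" "n \<ge> N"
            have "norm (x m - x n) \<le> c * norm (opfun G (x m - x n))" using c G.dom_diff x by blast
            also have "\<dots> \<le> (\<bar>c\<bar> + 1) * dist (f m) (f n)"
              using x by (simp add: G.f_diff dist_norm mult_right_mono)
            also have "\<dots> < (\<bar>c\<bar> + 1) * (e / (\<bar>c\<bar> + 1))"
              using N[OF mn] by (intro mult_strict_left_mono) auto
            also have "\<dots> = e" by (simp add: add_pos_nonneg)
            finally show "dist (x m) (x n) < e" by (simp add: dist_norm)
          qed
        qed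
        then obtain y where xy: "x \<longlonglongrightarrow> y" using complete_UNIV convergent_eq_Cauchy by blast
        have fx: "f = (\<lambda>n. opfun G (x n))" using x(2) by (intro ext) simp
        have "y \<in> opdom G \<and> opfun G y = h"
          using fh unfolding fx by (rule G.closed_op[OF x(1) xy])
        thus "h \<in> opfun G ` opdom G" by (metis image_eqI)
      qed
      show "0 \<in> opfun G ` opdom G" using G.dom0 G.f0 by (metis image_eqI)
      show "x + y \<in> opfun G ` opdom G" if xy: "x \<in> opfun G ` opdom G" "y \<in> opfun G ` opdom G" for x y
      proof -
        obtain p q where pq: "p \<in> opdom G" "q \<in> opdom G" "x = opfun G p" "y = opfun G q" using xy by blast
        have "x + y = opfun G (p + q)" using pq by (simp add: G.f_add)
        thus ?thesis using G.dom_add[OF pq(1,2)] by blast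
      qed
      show "a *\<^sub>C x \<in> opfun G ` opdom G" if xx: "x \<in> opfun G ` opdom G" for a x
      proof -
        obtain p where p: "p \<in> opdom G" "x = opfun G p" using xx by blast
        have "a *\<^sub>C x = opfun G (a *\<^sub>C p)" using p by (simp add: G.f_sc)
        thus ?thesis using G.dom_sc[OF p(1)] by blast
      qed
      fix w assume w: "\<forall>m\<in>opfun G ` opdom G. cinner m w = 0"
      have "w \<in> opdom G \<and> opfun G w = 0"
        by (rule G.adj_eq) (use w in auto)
      thus "w = 0" using c[of w] by simp
    qed
    thus ?thesis by blast
  qed
  show ?thesis unfolding resolvent_set_def
    using inj surj c by auto
qed


end
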